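(* Let the sequences be generated by Algorithm iMBA and suppose Assumptions 2 and 3 hold. Then: (i) the sequence $\{(\overline x^k,\xi^k,V^k)\}_{k\in\mathbb{N}}$ is bounded, where $\overline x^k:=\overline x^{k,j_k}$; (ii) there exists $\beta_L>0$ with $\|L^k\|\le\beta_L$ for all $k$; (iii) $\{\mu_k\}_{k\in\mathbb{N}}$ is bounded, hence there exists $\beta_{\mathcal Q}>0$ with $\|\mathcal Q_k\|\le\beta_{\mathcal Q}$ for all $k$.
   Context: Problem (P): $\min_{x\in\mathbb{R}^n}F(x):=g_0(x)+\delta_{\mathbb{R}^m_-}(g(x))+\phi(x)$, where $g=(g_1,\dots,g_m)^\top$ and $\delta_{\mathbb{R}^m_-}$ is the indicator of the nonpositive orthant. Assumption 1 (standing): (i) $g_0:\mathbb{R}^n\to(-\infty,\infty]$ is locally Lipschitz and upper-$\mathcal C^2$ at every point of an open convex set $\mathcal O\supset\Gamma:=\{x:g(x)\in\mathbb{R}^m_-\}\neq\emptyset$, and each $g_i:\mathbb{R}^n\to\mathbb{R}$, $i\in[m]$, is locally Lipschitz and upper-$\mathcal C^2$ at every point of $\mathbb{R}^n$; (ii) $\phi:\mathbb{R}^n\to\mathbb{R}$ is convex and $F$ is bounded below on $\Gamma$. $\partial$ denotes the limiting subdifferential; $\partial g(x):=\{V\in\mathbb{R}^{n\times m}: V_i\in\partial g_i(x)\ \forall i\}$. Define $G(x,s,V,L):=g(s)+V^\top(x-s)+\tfrac12\|x-s\|^2L$. Algorithm iMBA (parameters $0<\mu_{\min}\le\mu_{\max}$,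 $0<L_{\min}\le L_{\max}$, $M,\beta_C,\beta_S,\alpha>0$, $\tau>1$, $x^0\in\Gamma$): at iteration $k$ choose $\xi^k\in\partial g_0(x^k)$, $V^k\in\partial g(x^k)$, $\mu_{k,0}\in[\mu_{\min},\mu_{\max}]$, $L^{k,0}\in[L_{\min},L_{\max}]^m$; for $j=0,1,\dots$ choose self-adjoint $\mathcal Q_{k,j}$ with $\mu_{k,j}\mathcal I\preceq\mathcal Q_{k,j}\preceq(\mu_{k,j}+M)\mathcal I$, let $F_{k,j}(x):=g_0(x^k)+\langle\xi^k,x-x^k\rangle+\frac12\langle x-x^k,\mathcal Q_{k,j}(x-x^k)\rangle+\phi(x)$, $\Gamma_{k,j}:=\{x:G(x,x^k,V^k,L^{k,j})\in\mathbb{R}^m_-\}$, $\overline x^{k,j}$ the unique minimizer of $F_{k,j}$ on $\Gamma_{k,j}$, and compute $y^{k,j}$, $v^{k,j}\in\partial\phi(y^{k,j})$, $\lambda^{k,j}\in\mathbb{R}^m_+$ with $F_{k,j}(y^{k,j})\le F_{k,j}(x^k)$, $(-\langle\lambda^{k,j},G(y^{k,j},x^k,V^k,L^{k,j})\rangle)_++\|[G(y^{k,j},x^k,V^k,L^{k,j})]_+\|_\infty\le\frac{\beta_C}2\|y^{k,j}-x^k\|^2$ and $\|\xi^k+\mathcal Q_{k,j}(y^{k,j}-x^k)+v^{k,j}+V^k\lambda^{k,j}+\langle L^{k,j},\lambda^{k,j}\rangle(y^{k,j}-x^k)\|\le\beta_S\|y^{k,j}-x^k\|$. If $g(y^{k,j})\in\mathbb{R}^m_-$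 and $F(y^{k,j})\le F(x^k)-\frac\alpha2\|y^{k,j}-x^k\|^2$, accept ($j_k:=j$); else if $g(y^{k,j})\notin\mathbb{R}^m_-$ set $L^{k,j+1}=\tau L^{k,j}$, $\mu_{k,j+1}=\mu_{k,j}$; else $L^{k,j+1}=L^{k,j}$, $\mu_{k,j+1}=\tau\mu_{k,j}$. Then $x^{k+1}:=y^{k,j_k}$, $(\mu_k,\mathcal Q_k,L^k,v^{k+1},\lambda^{k+1}):=(\mu_{k,j_k},\mathcal Q_{k,j_k},L^{k,j_k},v^{k,j_k},\lambda^{k,j_k})$, $\overline x^k:=\overline x^{k,j_k}$. Assumption 2: for each $k,j$, the multifunction $x\mapsto G(x,x^k,V^k,L^{k,j})-\mathbb{R}^m_-$ is metrically subregular at $(\overline x^{k,j},0)$. Assumption 3: $\{x^k\}$ is bounded; $\omega(x^0)$ denotes its set of cluster points. *)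

theory Defs
  imports "HOL-Analysis.Analysis"
begin

definition frechet_subdiff :: "('a::euclidean_space \<Rightarrow> real) \<Rightarrow> 'a \<Rightarrow> 'a set" where
  "frechet_subdiff f x =
     {v. \<forall>e>0. \<exists>d>0. \<forall>y\<in>ball x d. f y \<ge> f x + v \<bullet> (y - x) - e * norm (y - x)}"

definition limiting_subdiff :: "('a::euclidean_space \<Rightarrow> real) \<Rightarrow> 'a \<Rightarrow> 'a set" where
  "limiting_subdiff f x =
     {v. \<exists>xs vs. xs \<longlonglongrightarrow> x \<and> (\<lambda>k. f (xs k)) \<longlonglongrightarrow> f x \<and> vs \<longlonglongrightarrow> v \<and>
              (\<forall>k. vs k \<in> frechet_subdiff f (xs k))}"

definition loc_lipschitz_at :: "('a::euclidean_space \<Rightarrow> real) \<Rightarrow> 'a \<Rightarrow> bool" where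
  "loc_lipschitz_at f x \<longleftrightarrow> (\<exists>r>0. \<exists>K. K-lipschitz_on (ball x r) f)"

text \<open>Upper-C2 at a point (for finite-valued f), via the characterization of
  Rockafellar--Wets Thm 10.33: f minus a quadratic is concave near x.\<close>
definition upper_C2_at :: "('a::euclidean_space \<Rightarrow> real) \<Rightarrow> 'a \<Rightarrow> bool" where
  "upper_C2_at f x \<longleftrightarrow>
     (\<exists>r>0. \<exists>\<rho>\<ge>0. concave_on (ball x r) (\<lambda>z. f z - \<rho> / 2 * (norm z)\<^sup>2))"

definition nonpos_orth :: "(real^'m) set" where
  "nonpos_orth = {u. \<forall>i. u $ i \<le> 0}"

definition Fobj :: "('a \<Rightarrow> real) \<Rightarrow> ('a \<Rightarrow> real^'m) \<Rightarrow> ('a \<Rightarrow> real) \<Rightarrow> 'a \<Rightarrow> ereal" where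
  "Fobj g0 g \<phi> x = (if g x \<in> nonpos_orth then ereal (g0 x + \<phi> x) else \<infinity>)"

text \<open>G(x,s,V,L) = g(s) + V^T (x - s) + 1/2 |x-s|^2 L; V is stored column-wise
  (V $ i is the i-th column, an element of R^n).\<close>
definition Gfun :: "('a::euclidean_space \<Rightarrow> real^'m) \<Rightarrow> 'a \<Rightarrow> 'a \<Rightarrow> 'a^'m \<Rightarrow> real^'m \<Rightarrow> real^'m" where
  "Gfun g x s V L = g s + (\<chi> i. V $ i \<bullet> (x - s)) + ((1/2) * (norm (x - s))\<^sup>2) *\<^sub>R L"

definition Fmodel :: "('a::euclidean_space \<Rightarrow> real) \<Rightarrow> ('a \<Rightarrow> real) \<Rightarrow> 'a \<Rightarrow> 'a \<Rightarrow> ('a \<Rightarrow> 'a) \<Rightarrow> 'a \<Rightarrow> real" where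
  "Fmodel g0 \<phi> xk \<xi> Q x = g0 xk + \<xi> \<bullet> (x - xk) + (1/2) * ((x - xk) \<bullet> Q (x - xk)) + \<phi> x"

definition metric_subregular_orth :: "('a::euclidean_space \<Rightarrow> real^'m) \<Rightarrow> 'a \<Rightarrow> bool" where
  "metric_subregular_orth H xbar \<longleftrightarrow> H xbar \<in> nonpos_orth \<and>
     (\<exists>\<kappa>>0. \<exists>e>0. \<forall>x\<in>ball xbar e.
        infdist x {z. H z \<in> nonpos_orth} \<le> \<kappa> * infdist 0 {H x - u | u. u \<in> nonpos_orth})"

end

theory Submission
  imports Defs
begin
lemma le_of_eps:
  fixes a b c :: real
  assumes "c \<ge> 0" "\<And>e. e > 0 \<Longrightarrow> a \<le> b + e * c"
  shows "a \<le> b"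
proof (rule field_le_epsilon)
  fix e :: real assume e: "e > 0"
  have "e / (c + 1) > 0" using assms e by simp
  then have "a \<le> b + (e / (c + 1)) * c" using assms(2) by blast
  also have "(e / (c + 1)) * c \<le> e" using assms e by (simp add: field_simps)
  finally show "a \<le> b + e" by simp
qed

lemma frechet_concave:
  fixes h :: "'a::euclidean_space \<Rightarrow> real"
  assumes conc: "concave_on B h" and B: "open B" and xB: "x \<in> B" and yB: "y \<in> B"
    and u: "u \<in> frechet_subdiff h x"
  shows "h y \<le> h x + u \<bullet> (y - x)"
proof -
  define d where "d = y - x"
  have "h y - h x \<le> u \<bullet> d + e * norm d" if e: "e > 0" for e
  proof -
    obtain \<delta> where \<delta>: "\<delta> > 0" and fr: "\<forall>z\<in>ball x \<delta>. h z \<ge> h x + u \<bullet> (z - x) - e * norm (z - x)"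
      using u e unfolding frechet_subdiff_def by blast
    obtain r where r: "r > 0" "ball x r \<subseteq> B" using B xB open_contains_ball by blast
    define t where "t = min 1 (min \<delta> r / (2 * (norm d + 1)))"
    have nd: "2 * (norm d + 1) > 0" by (smt (verit) norm_ge_zero)
    have t0: "t > 0" using \<delta> r nd by (simp add: t_def)
    have t1: "t \<le> 1" by (simp add: t_def)
    have "t * norm d \<le> min \<delta> r / (2 * (norm d + 1)) * norm d"
      by (intro mult_right_mono) (auto simp: t_def)
    also have "\<dots> = min \<delta> r * (norm d / (2 * (norm d + 1)))" by simp
    also have "\<dots> < min \<delta> r * 1"
      using \<delta> r nd by (intro mult_strict_left_mono) (auto simp: divide_less_eq)
    also have "\<dots> = min \<delta> r" by simp
    finally have td: "t * norm d < min \<delta> r" .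
    have m: "x - t *\<^sub>R d \<in> ball x \<delta>" "x - t *\<^sub>R d \<in> B"
      using td t0 r by (auto simp: dist_norm)
    have fr2: "h (x - t *\<^sub>R d) \<ge> h x - t * (u \<bullet> d) - e * (t * norm d)"
    proof -
      have "h (x - t *\<^sub>R d) \<ge> h x + u \<bullet> ((x - t *\<^sub>R d) - x) - e * norm ((x - t *\<^sub>R d) - x)"
        using fr m(1) by blast
      then show ?thesis using t0 by simp
    qed
    have c1: "h ((1 - t) *\<^sub>R x + t *\<^sub>R y) \<ge> (1 - t) * h x + t * h y"
      using concave_onD[OF conc, of t x y] t0 t1 xB yB by simp
    have eq1: "(1 - t) *\<^sub>R x + t *\<^sub>R y = x + t *\<^sub>R d"
      by (simp add: d_def algebra_simps)
    have c2: "h ((1 - 1/2) *\<^sub>R (x + t *\<^sub>R d) + (1/2) *\<^sub>R (x - t *\<^sub>R d)) \<ge>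
               (1 - 1/2) * h (x + t *\<^sub>R d) + (1/2) * h (x - t *\<^sub>R d)"
    proof (rule concave_onD[OF conc])
      show "x + t *\<^sub>R d \<in> B"
      proof -
        have "dist x (x + t *\<^sub>R d) = t * norm d" using t0 by (simp add: dist_norm)
        then have "x + t *\<^sub>R d \<in> ball x r" using td by simp
        then show ?thesis using r by auto
      qed
    qed (use m in auto)
    have eq2: "(1 - 1/2) *\<^sub>R (x + t *\<^sub>R d) + (1/2) *\<^sub>R (x - t *\<^sub>R d) = x"
    proof -
      have "(1 - 1/2) *\<^sub>R (x + t *\<^sub>R d) + (1/2) *\<^sub>R (x - t *\<^sub>R d) = ((1/2) + (1/2::real)) *\<^sub>R x"
        by (simp only: scaleR_add_right scaleR_diff_right scaleR_add_left) simp
      then show ?thesis by simp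
    qed
    have "t * (h y - h x) \<le> t * (u \<bullet> d + e * norm d)"
    proof -
      have c2': "h x \<ge> (1/2) * h (x + t *\<^sub>R d) + (1/2) * h (x - t *\<^sub>R d)"
        using c2 unfolding eq2 by simp
      have c1': "h (x + t *\<^sub>R d) \<ge> (1 - t) * h x + t * h y" using c1 unfolding eq1 .
      have q1: "(1 - t) * h x = h x - t * h x" by (simp add: algebra_simps)
      have q2: "t * (h y - h x) = t * h y - t * h x" by (simp add: algebra_simps)
      have q3: "t * (u \<bullet> d + e * norm d) = t * (u \<bullet> d) + e * (t * norm d)" by (simp add: algebra_simps)
      show ?thesis using c1' c2' fr2 unfolding q2 q3 using q1 by linarith
    qed
    then show ?thesis using t0 by simp
  qed
  then have "h y - h x \<le> u \<bullet> d" by (rule le_of_eps[OF norm_ge_zero])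
  then show ?thesis by (simp add: d_def)
qed

lemma sq_identity:
  fixes x y :: "'a::real_inner"
  shows "(norm y)\<^sup>2 - (norm x)\<^sup>2 - 2 * (x \<bullet> (y - x)) = (norm (y - x))\<^sup>2"
proof -
  have a: "(norm (y - x))\<^sup>2 = y \<bullet> y - 2 * (x \<bullet> y) + x \<bullet> x"
    unfolding power2_norm_eq_inner inner_diff_left inner_diff_right using inner_commute[of x y] by simp
  have b: "x \<bullet> (y - x) = x \<bullet> y - x \<bullet> x" by (simp add: inner_diff_right)
  have c: "(norm y)\<^sup>2 = y \<bullet> y" "(norm x)\<^sup>2 = x \<bullet> x" by (simp_all add: power2_norm_eq_inner)
  show ?thesis using a b c by linarith
qed

lemma frechet_shift:
  fixes f :: "'a::euclidean_space \<Rightarrow> real"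
  assumes w: "w \<in> frechet_subdiff f x" and \<rho>: "\<rho> \<ge> 0"
  shows "w - \<rho> *\<^sub>R x \<in> frechet_subdiff (\<lambda>z. f z - \<rho> / 2 * (norm z)\<^sup>2) x"
  unfolding frechet_subdiff_def
proof (intro CollectI allI impI)
  fix e :: real assume e: "e > 0"
  then have "e / 2 > 0" by simp
  then obtain \<delta> where \<delta>: "\<delta> > 0" and fr: "\<forall>y\<in>ball x \<delta>. f y \<ge> f x + w \<bullet> (y - x) - e / 2 * norm (y - x)"
    using w unfolding frechet_subdiff_def by blast
  define \<delta>' where "\<delta>' = min \<delta> (e / (\<rho> + 1))"
  have \<delta>'0: "\<delta>' > 0" using \<delta> e \<rho> by (simp add: \<delta>'_def)
  have "\<forall>y\<in>ball x \<delta>'. f y - \<rho> / 2 * (norm y)\<^sup>2 \<ge> f x - \<rho> / 2 * (norm x)\<^sup>2 + (w - \<rho> *\<^sub>R x) \<bullet> (y - x) - e * norm (y - x)"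
  proof
    fix y assume y: "y \<in> ball x \<delta>'"
    then have y1: "y \<in> ball x \<delta>" by (simp add: \<delta>'_def)
    have fy: "f y \<ge> f x + w \<bullet> (y - x) - e / 2 * norm (y - x)" using fr y1 by blast
    have ny: "norm (y - x) < e / (\<rho> + 1)" using y by (simp add: \<delta>'_def dist_norm norm_minus_commute)
    have "\<rho> * norm (y - x) \<le> (\<rho> + 1) * norm (y - x)" by (simp add: algebra_simps)
    also have "\<dots> \<le> e" using ny \<rho> by (simp add: field_simps)
    finally have r1: "\<rho> * norm (y - x) \<le> e" .
    have "\<rho> / 2 * (norm (y - x))\<^sup>2 = (\<rho> * norm (y - x)) * norm (y - x) / 2"
      by (simp add: power2_eq_square)
    also have "\<dots> \<le> e * norm (y - x) / 2"
      using r1 by (intro divide_right_mono mult_right_mono) auto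
    finally have r2: "\<rho> / 2 * (norm (y - x))\<^sup>2 \<le> e / 2 * norm (y - x)" by simp
    have id: "(norm y)\<^sup>2 - (norm x)\<^sup>2 - 2 * (x \<bullet> (y - x)) = (norm (y - x))\<^sup>2"
      by (rule sq_identity)
    have ip: "(w - \<rho> *\<^sub>R x) \<bullet> (y - x) = w \<bullet> (y - x) - \<rho> * (x \<bullet> (y - x))"
      by (simp add: inner_diff_left)
    have "\<rho> / 2 * (norm y)\<^sup>2 = \<rho> / 2 * (norm x)\<^sup>2 + \<rho> * (x \<bullet> (y - x)) + \<rho> / 2 * (norm (y - x))\<^sup>2"
    proof -
      have "(norm y)\<^sup>2 = (norm x)\<^sup>2 + 2 * (x \<bullet> (y - x)) + (norm (y - x))\<^sup>2" using id by linarith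
      then have "\<rho> / 2 * (norm y)\<^sup>2 = \<rho> / 2 * ((norm x)\<^sup>2 + 2 * (x \<bullet> (y - x)) + (norm (y - x))\<^sup>2)" by simp
      also have "\<dots> = \<rho> / 2 * (norm x)\<^sup>2 + \<rho> * (x \<bullet> (y - x)) + \<rho> / 2 * (norm (y - x))\<^sup>2"
        by (simp add: distrib_left)
      finally show ?thesis .
    qed
    then show "f y - \<rho> / 2 * (norm y)\<^sup>2 \<ge> f x - \<rho> / 2 * (norm x)\<^sup>2 + (w - \<rho> *\<^sub>R x) \<bullet> (y - x) - e * norm (y - x)"
      using fy r2 ip by linarith
  qed
  then show "\<exists>d>0. \<forall>y\<in>ball x d. f y - \<rho> / 2 * (norm y)\<^sup>2 \<ge> f x - \<rho> / 2 * (norm x)\<^sup>2 + (w - \<rho> *\<^sub>R x) \<bullet> (y - x) - e * norm (y - x)"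
    using \<delta>'0 by blast
qed

lemma limiting_upper:
  fixes f :: "'a::euclidean_space \<Rightarrow> real"
  assumes conc: "concave_on B (\<lambda>z. f z - \<rho> / 2 * (norm z)\<^sup>2)" and B: "open B"
    and xB: "x \<in> B" and yB: "y \<in> B" and \<rho>: "\<rho> \<ge> 0"
    and v: "v \<in> limiting_subdiff f x"
  shows "f y \<le> f x + v \<bullet> (y - x) + \<rho> / 2 * (norm (y - x))\<^sup>2"
proof -
  define h where "h = (\<lambda>z. f z - \<rho> / 2 * (norm z)\<^sup>2)"
  obtain xs vs where xs: "xs \<longlonglongrightarrow> x" and fx: "(\<lambda>k. f (xs k)) \<longlonglongrightarrow> f x"
    and vs: "vs \<longlonglongrightarrow> v" and fr: "\<forall>k. vs k \<in> frechet_subdiff f (xs k)"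
    using v unfolding limiting_subdiff_def by blast
  have ev: "eventually (\<lambda>k. xs k \<in> B) sequentially"
    using xs B xB by (simp add: tendsto_def)
  have ev2: "eventually (\<lambda>k. h y \<le> h (xs k) + (vs k - \<rho> *\<^sub>R xs k) \<bullet> (y - xs k)) sequentially"
    using ev
  proof (rule eventually_mono)
    fix k assume "xs k \<in> B"
    then show "h y \<le> h (xs k) + (vs k - \<rho> *\<^sub>R xs k) \<bullet> (y - xs k)"
      unfolding h_def
      by (rule frechet_concave[OF conc B _ yB frechet_shift[OF fr[rule_format] \<rho>]])
  qed
  have lim: "(\<lambda>k. h (xs k) + (vs k - \<rho> *\<^sub>R xs k) \<bullet> (y - xs k)) \<longlonglongrightarrow> h x + (v - \<rho> *\<^sub>R x) \<bullet> (y - x)"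
    unfolding h_def by (intro tendsto_intros fx xs vs)
  have hy: "h y \<le> h x + (v - \<rho> *\<^sub>R x) \<bullet> (y - x)"
    by (rule tendsto_lowerbound[OF lim ev2]) simp
  have id: "(norm y)\<^sup>2 = (norm x)\<^sup>2 + 2 * (x \<bullet> (y - x)) + (norm (y - x))\<^sup>2"
    using sq_identity[of y x] by linarith
  have ip: "(v - \<rho> *\<^sub>R x) \<bullet> (y - x) = v \<bullet> (y - x) - \<rho> * (x \<bullet> (y - x))"
    by (simp add: inner_diff_left)
  have "\<rho> / 2 * (norm y)\<^sup>2 = \<rho> / 2 * ((norm x)\<^sup>2 + 2 * (x \<bullet> (y - x)) + (norm (y - x))\<^sup>2)"
    using id by simp
  also have "\<dots> = \<rho> / 2 * (norm x)\<^sup>2 + \<rho> * (x \<bullet> (y - x)) + \<rho> / 2 * (norm (y - x))\<^sup>2"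
    by (simp add: distrib_left)
  finally have q: "\<rho> / 2 * (norm y)\<^sup>2 = \<rho> / 2 * (norm x)\<^sup>2 + \<rho> * (x \<bullet> (y - x)) + \<rho> / 2 * (norm (y - x))\<^sup>2" .
  show ?thesis using hy q ip unfolding h_def by linarith
qed

lemma uc2_local:
  fixes f :: "'a::euclidean_space \<Rightarrow> real"
  assumes U: "open U" and uc: "\<forall>z\<in>U. upper_C2_at f z" and S: "compact S" and SU: "S \<subseteq> U"
  obtains \<delta> \<rho> where "\<delta> > 0" "\<rho> \<ge> 0" "\<forall>x\<in>S. ball x \<delta> \<subseteq> U"
    "\<forall>x\<in>S. \<forall>v\<in>limiting_subdiff f x. \<forall>y\<in>ball x \<delta>. f y \<le> f x + v \<bullet> (y - x) + \<rho> / 2 * (norm (y - x))\<^sup>2"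
proof -
  have "\<forall>z\<in>U. \<exists>r \<rho>. r > 0 \<and> \<rho> \<ge> 0 \<and> ball z r \<subseteq> U \<and> concave_on (ball z r) (\<lambda>w. f w - \<rho> / 2 * (norm w)\<^sup>2)"
  proof
    fix z assume z: "z \<in> U"
    obtain r0 \<rho> where r0: "r0 > 0" "\<rho> \<ge> 0" "concave_on (ball z r0) (\<lambda>w. f w - \<rho> / 2 * (norm w)\<^sup>2)"
      using uc z unfolding upper_C2_at_def by blast
    obtain r1 where r1: "r1 > 0" "ball z r1 \<subseteq> U" using U z open_contains_ball by blast
    have "concave_on (ball z (min r0 r1)) (\<lambda>w. f w - \<rho> / 2 * (norm w)\<^sup>2)"
      using r0(3) unfolding concave_on_def by (rule convex_on_subset) auto
    moreover have "ball z (min r0 r1) \<subseteq> U" using r1 by auto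
    ultimately show "\<exists>r \<rho>. r > 0 \<and> \<rho> \<ge> 0 \<and> ball z r \<subseteq> U \<and> concave_on (ball z r) (\<lambda>w. f w - \<rho> / 2 * (norm w)\<^sup>2)"
      using r0 r1 by (intro exI[of _ "min r0 r1"] exI[of _ \<rho>]) auto
  qed
  then obtain R P where RP: "\<And>z. z \<in> U \<Longrightarrow> R z > 0 \<and> P z \<ge> 0 \<and> ball z (R z) \<subseteq> U \<and>
      concave_on (ball z (R z)) (\<lambda>w. f w - P z / 2 * (norm w)\<^sup>2)"
    by metis
  have cov: "S \<subseteq> (\<Union>z\<in>S. ball z (R z))"
  proof
    fix x assume "x \<in> S"
    then have "x \<in> ball x (R x)" using RP SU by auto
    then show "x \<in> (\<Union>z\<in>S. ball z (R z))" using \<open>x \<in> S\<close> by blast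
  qed
  obtain F where F: "F \<subseteq> S" "finite F" "S \<subseteq> (\<Union>z\<in>F. ball z (R z))"
    using compactE_image[OF S _ cov] by blast
  obtain \<epsilon> where \<epsilon>: "\<epsilon> > 0" "\<And>x. x \<in> S \<Longrightarrow> \<exists>G \<in> (\<lambda>z. ball z (R z)) ` F. ball x \<epsilon> \<subseteq> G"
    using Heine_Borel_lemma[OF S, of "(\<lambda>z. ball z (R z)) ` F"] F(3) by auto
  define \<rho> where "\<rho> = (\<Sum>z\<in>F. P z)"
  have \<rho>0: "\<rho> \<ge> 0" unfolding \<rho>_def using F RP SU by (intro sum_nonneg) auto
  have main: "ball x \<epsilon> \<subseteq> U \<and> (\<forall>v\<in>limiting_subdiff f x. \<forall>y\<in>ball x \<epsilon>. f y \<le> f x + v \<bullet> (y - x) + \<rho> / 2 * (norm (y - x))\<^sup>2)"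
    if x: "x \<in> S" for x
  proof -
    obtain z where z: "z \<in> F" "ball x \<epsilon> \<subseteq> ball z (R z)" using \<epsilon>(2)[OF x] by blast
    have zU: "z \<in> U" using z F SU by auto
    note Rz = RP[OF zU]
    have "x \<in> ball x \<epsilon>" using \<epsilon>(1) by simp
    then have xb: "x \<in> ball z (R z)" using z(2) by blast
    have Pz: "P z \<le> \<rho>" unfolding \<rho>_def using F RP SU z by (intro member_le_sum) auto
    show ?thesis
    proof
      show "ball x \<epsilon> \<subseteq> U" using z Rz by blast
      show "\<forall>v\<in>limiting_subdiff f x. \<forall>y\<in>ball x \<epsilon>. f y \<le> f x + v \<bullet> (y - x) + \<rho> / 2 * (norm (y - x))\<^sup>2"
      proof (intro ballI)
        fix v y assume v: "v \<in> limiting_subdiff f x" and y: "y \<in> ball x \<epsilon>"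
        have "f y \<le> f x + v \<bullet> (y - x) + P z / 2 * (norm (y - x))\<^sup>2"
          using limiting_upper[of "ball z (R z)" f "P z" x y v] Rz xb y z(2) v by auto
        also have "P z / 2 * (norm (y - x))\<^sup>2 \<le> \<rho> / 2 * (norm (y - x))\<^sup>2"
          using Pz by (intro mult_right_mono) auto
        finally show "f y \<le> f x + v \<bullet> (y - x) + \<rho> / 2 * (norm (y - x))\<^sup>2" by simp
      qed
    qed
  qed
  show ?thesis using that[OF \<epsilon>(1) \<rho>0] main by blast
qed

lemma uc2_global:
  fixes f :: "'a::euclidean_space \<Rightarrow> real"
  assumes U: "open U" and uc: "\<forall>z\<in>U. upper_C2_at f z" and cont: "continuous_on U f"
    and S: "compact S" and SU: "S \<subseteq> U"
  obtains \<rho> Vb where "\<rho> \<ge> 0" "Vb \<ge> 0"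
    "\<forall>x\<in>S. \<forall>v\<in>limiting_subdiff f x. norm v \<le> Vb \<and>
        (\<forall>y\<in>S. f y \<le> f x + v \<bullet> (y - x) + \<rho> / 2 * (norm (y - x))\<^sup>2)"
proof -
  obtain \<delta> \<rho> where \<delta>: "\<delta> > 0" and \<rho>: "\<rho> \<ge> 0" and bU: "\<forall>x\<in>S. ball x \<delta> \<subseteq> U"
    and loc: "\<forall>x\<in>S. \<forall>v\<in>limiting_subdiff f x. \<forall>y\<in>ball x \<delta>. f y \<le> f x + v \<bullet> (y - x) + \<rho> / 2 * (norm (y - x))\<^sup>2"
    using uc2_local[OF U uc S SU] by blast
  define s where "s = \<delta> / 2"
  have s0: "s > 0" "s < \<delta>" using \<delta> by (auto simp: s_def)
  define T where "T = {a + b | a b. a \<in> S \<and> b \<in> cball 0 s}"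
  have Tc: "compact T" unfolding T_def by (intro compact_sums S compact_cball)
  have TU: "T \<subseteq> U"
  proof
    fix t assume "t \<in> T"
    then obtain a b where ab: "t = a + b" "a \<in> S" "norm b \<le> s" unfolding T_def by auto
    have "t \<in> ball a \<delta>" using ab s0 by (simp add: dist_norm)
    then show "t \<in> U" using bU ab by blast
  qed
  have ST: "S \<subseteq> T"
  proof
    fix a assume a: "a \<in> S"
    have "\<exists>a' b. a = a' + b \<and> a' \<in> S \<and> b \<in> cball 0 s"
      by (rule exI[of _ a], rule exI[of _ 0]) (use a s0 in simp)
    then show "a \<in> T" unfolding T_def by simp
  qed
  have "compact (f ` T)" by (rule compact_continuous_image[OF continuous_on_subset[OF cont TU] Tc])
  then obtain B where B: "B > 0" "\<forall>t\<in>T. \<bar>f t\<bar> \<le> B"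
    using compact_imp_bounded bounded_pos by (metis imageI real_norm_def)
  define Vb where "Vb = (2 * B + \<rho> / 2 * s\<^sup>2) / s"
  have Vb0: "Vb \<ge> 0" unfolding Vb_def using B s0 \<rho> by simp
  have nb: "norm v \<le> Vb" if x: "x \<in> S" and v: "v \<in> limiting_subdiff f x" for x v
  proof (cases "v = 0")
    case True then show ?thesis using Vb0 by simp
  next
    case False
    then have nv: "norm v > 0" by simp
    define y where "y = x - (s / norm v) *\<^sub>R v"
    have yx: "y - x = - ((s / norm v) *\<^sub>R v)" by (simp add: y_def)
    have nyx: "norm (y - x) = s" unfolding yx using nv s0 by simp
    have yb: "y \<in> ball x \<delta>" using nyx s0 by (simp add: dist_norm norm_minus_commute)
    have "\<exists>a' b. y = a' + b \<and> a' \<in> S \<and> b \<in> cball 0 s"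
      by (rule exI[of _ x], rule exI[of _ "- ((s / norm v) *\<^sub>R v)"]) (use x s0 nv in \<open>simp add: y_def\<close>)
    then have yT: "y \<in> T" unfolding T_def by simp
    have ip: "v \<bullet> (y - x) = - (s * norm v)"
      unfolding yx using nv by (simp add: power2_norm_eq_inner[symmetric] power2_eq_square)
    have "f y \<le> f x + v \<bullet> (y - x) + \<rho> / 2 * (norm (y - x))\<^sup>2" using loc x v yb by blast
    then have "s * norm v \<le> f x - f y + \<rho> / 2 * s\<^sup>2" unfolding ip nyx by linarith
    also have "\<dots> \<le> 2 * B + \<rho> / 2 * s\<^sup>2" using B x yT ST by (smt (verit) subsetD)
    finally have "s * norm v \<le> 2 * B + \<rho> / 2 * s\<^sup>2" .
    then show ?thesis unfolding Vb_def using s0 by (simp add: field_simps)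
  qed
  define \<rho>' where "\<rho>' = \<rho> + 2 * (2 * B / \<delta>\<^sup>2 + Vb / \<delta>)"
  have \<rho>'0: "\<rho>' \<ge> 0" unfolding \<rho>'_def using \<rho> B Vb0 \<delta> by simp
  have glob: "f y \<le> f x + v \<bullet> (y - x) + \<rho>' / 2 * (norm (y - x))\<^sup>2"
    if x: "x \<in> S" and v: "v \<in> limiting_subdiff f x" and y: "y \<in> S" for x v y
  proof (cases "norm (y - x) < \<delta>")
    case True
    then have "y \<in> ball x \<delta>" by (simp add: dist_norm norm_minus_commute)
    then have "f y \<le> f x + v \<bullet> (y - x) + \<rho> / 2 * (norm (y - x))\<^sup>2" using loc x v by blast
    moreover have "\<rho> / 2 * (norm (y - x))\<^sup>2 \<le> \<rho>' / 2 * (norm (y - x))\<^sup>2"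
      unfolding \<rho>'_def using B Vb0 \<delta> by (intro mult_right_mono) auto
    ultimately show ?thesis by simp
  next
    case False
    define n where "n = norm (y - x)"
    have n: "n \<ge> \<delta>" using False by (simp add: n_def)
    have fb: "f y - f x \<le> 2 * B" using B x y ST by (smt (verit) subsetD)
    have "- (v \<bullet> (y - x)) \<le> norm v * n" unfolding n_def
      using norm_cauchy_schwarz[of "- v" "y - x"] by simp
    also have "\<dots> \<le> Vb * n" using nb[OF x v] n \<delta> by (intro mult_right_mono) auto
    finally have vb: "- (v \<bullet> (y - x)) \<le> Vb * n" .
    have d2: "\<delta>\<^sup>2 \<le> n\<^sup>2" using n \<delta> by (intro power_mono) auto
    have t1: "2 * B \<le> 2 * B / \<delta>\<^sup>2 * n\<^sup>2"
    proof -
      have "2 * B = 2 * B / \<delta>\<^sup>2 * \<delta>\<^sup>2" using \<delta> by simp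
      also have "\<dots> \<le> 2 * B / \<delta>\<^sup>2 * n\<^sup>2" using d2 B by (intro mult_left_mono) auto
      finally show ?thesis .
    qed
    have t2: "Vb * n \<le> Vb / \<delta> * n\<^sup>2"
    proof -
      have "Vb * n = Vb / \<delta> * (\<delta> * n)" using \<delta> by simp
      also have "\<dots> \<le> Vb / \<delta> * (n * n)" using n \<delta> Vb0 by (intro mult_left_mono mult_right_mono) auto
      finally show ?thesis by (simp add: power2_eq_square)
    qed
    have "\<rho>' / 2 * n\<^sup>2 = \<rho> / 2 * n\<^sup>2 + 2 * B / \<delta>\<^sup>2 * n\<^sup>2 + Vb / \<delta> * n\<^sup>2"
      unfolding \<rho>'_def by (simp add: algebra_simps)
    moreover have "\<rho> / 2 * n\<^sup>2 \<ge> 0" using \<rho> by simp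
    ultimately show ?thesis using fb vb t1 t2 unfolding n_def[symmetric] by linarith
  qed
  show ?thesis using that[OF \<rho>'0 Vb0] nb glob by blast
qed

lemma lip_cont:
  fixes f :: "'a::euclidean_space \<Rightarrow> real"
  assumes "\<forall>z\<in>U. loc_lipschitz_at f z"
  shows "continuous_on U f"
proof (rule continuous_at_imp_continuous_on, rule ballI)
  fix z assume "z \<in> U"
  then obtain r K where r: "r > 0" "K-lipschitz_on (ball z r) f"
    using assms unfolding loc_lipschitz_at_def by blast
  have "continuous_on (ball z r) f" by (rule lipschitz_on_continuous_on[OF r(2)])
  then show "isCont f z" using r(1) by (simp add: continuous_on_eq_continuous_at)
qed

lemma quad_bound:
  fixes a b c t :: real
  assumes "a > 0" "t \<ge> 0" "b \<ge> 0" "c \<ge> 0" "a * t\<^sup>2 \<le> b * t + c"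
  shows "t \<le> max 1 ((b + c) / a)"
proof (cases "t \<le> 1")
  case True then show ?thesis by simp
next
  case False
  then have "c \<le> c * t" using assms by (simp add: mult_le_cancel_left1)
  then have "a * t * t \<le> (b + c) * t" using assms by (simp add: power2_eq_square algebra_simps)
  then have "a * t \<le> b + c" using False by simp
  then have "t \<le> (b + c) / a" using assms by (simp add: field_simps)
  then show ?thesis by simp
qed

lemma psd_norm_bound:
  fixes Q :: "'a::real_inner \<Rightarrow> 'a"
  assumes lin: "linear Q" and sym: "\<forall>u w. Q u \<bullet> w = u \<bullet> Q w"
    and lo: "\<forall>u. 0 \<le> u \<bullet> Q u" and up: "\<forall>u. u \<bullet> Q u \<le> c * (norm u)\<^sup>2" and c: "c \<ge> 0"
  shows "norm (Q u) \<le> c * norm u"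
proof (cases "u = 0 \<or> Q u = 0")
  case True
  then show ?thesis using c linear_0[OF lin] by auto
next
  case False
  then have u0: "norm u > 0" and z0: "norm (Q u) > 0" by auto
  define w where "w = (norm u / norm (Q u)) *\<^sub>R Q u"
  have nw: "norm w = norm u" using z0 u0 by (simp add: w_def)
  have wz: "w \<bullet> Q u = norm u * norm (Q u)"
    using z0 by (simp add: w_def power2_norm_eq_inner[symmetric] power2_eq_square)
  have s1: "u \<bullet> Q w = w \<bullet> Q u" using sym by (metis inner_commute)
  have e1: "(u + w) \<bullet> Q (u + w) = u \<bullet> Q u + u \<bullet> Q w + w \<bullet> Q u + w \<bullet> Q w"
    by (simp add: linear_add[OF lin] inner_add_left inner_add_right)
  have e2: "(u - w) \<bullet> Q (u - w) = u \<bullet> Q u - u \<bullet> Q w - w \<bullet> Q u + w \<bullet> Q w"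
    by (simp add: linear_diff[OF lin] inner_diff_left inner_diff_right)
  have "4 * (w \<bullet> Q u) = (u + w) \<bullet> Q (u + w) - (u - w) \<bullet> Q (u - w)"
    using e1 e2 s1 by linarith
  also have "\<dots> \<le> c * (norm (u + w))\<^sup>2" using lo up by (smt (verit))
  also have "\<dots> \<le> c * (norm u + norm w)\<^sup>2"
    using c by (intro mult_left_mono power_mono norm_triangle_ineq) auto
  also have "\<dots> = 4 * (c * norm u * norm u)" unfolding nw by (simp add: power2_eq_square algebra_simps)
  finally have "norm u * norm (Q u) \<le> norm u * (c * norm u)" unfolding wz by (simp add: algebra_simps)
  then show ?thesis using u0 by simp
qed

lemma convex_lower:
  fixes \<phi> :: "'a::euclidean_space \<Rightarrow> real"
  assumes cv: "convex_on UNIV \<phi>"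
  obtains B1 where "B1 \<ge> 0" "\<forall>x y. norm x \<le> Rx \<longrightarrow> \<phi> y - \<phi> x \<ge> - 2 * B1 * (norm (y - x) + 1)"
proof -
  have cont: "continuous_on UNIV \<phi>" by (rule convex_on_continuous[OF open_UNIV cv])
  have "compact (\<phi> ` cball 0 (Rx + 1))"
    by (rule compact_continuous_image[OF continuous_on_subset[OF cont] compact_cball]) simp
  then obtain B where B: "B > 0" "\<forall>t\<in>cball 0 (Rx + 1). \<bar>\<phi> t\<bar> \<le> B"
    using compact_imp_bounded bounded_pos by (metis imageI real_norm_def)
  have main: "\<phi> y - \<phi> x \<ge> - 2 * B * (norm (y - x) + 1)" if x: "norm x \<le> Rx" for x y
  proof -
    define n where "n = norm (y - x)"
    have xc: "x \<in> cball 0 (Rx + 1)" using x by simp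
    show ?thesis
    proof (cases "n \<le> 1")
      case True
      have "norm y \<le> norm x + n" unfolding n_def using norm_triangle_ineq[of x "y - x"] by simp
      then have "y \<in> cball 0 (Rx + 1)" using x True by simp
      then have "\<phi> y - \<phi> x \<ge> - 2 * B" using B xc by (smt (verit))
      moreover have "- 2 * B \<ge> - 2 * B * (n + 1)" using B n_def by (simp add: algebra_simps)
      ultimately show ?thesis unfolding n_def by linarith
    next
      case False
      define t where "t = 1 / n"
      have t: "t > 0" "t \<le> 1" using False by (auto simp: t_def)
      define p where "p = (1 - t) *\<^sub>R x + t *\<^sub>R y"
      have px: "p - x = t *\<^sub>R (y - x)" by (simp add: p_def algebra_simps)
      have "norm (p - x) = 1" unfolding px using t False by (simp add: t_def n_def)
      then have "norm p \<le> norm x + 1" using norm_triangle_ineq[of x "p - x"] by simp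
      then have pc: "p \<in> cball 0 (Rx + 1)" using x by simp
      have cvx: "\<phi> p \<le> (1 - t) * \<phi> x + t * \<phi> y"
        unfolding p_def using convex_onD[OF cv, of t x y] t by simp
      have "- 2 * B \<le> \<phi> p - \<phi> x" using B xc pc by (smt (verit))
      also have "\<dots> \<le> t * (\<phi> y - \<phi> x)" using cvx by (simp add: algebra_simps)
      finally have "- 2 * B \<le> t * (\<phi> y - \<phi> x)" .
      then have "- 2 * B * n \<le> \<phi> y - \<phi> x" using False by (simp add: t_def field_simps)
      moreover have "- 2 * B * (n + 1) \<le> - 2 * B * n" using B by simp
      ultimately show ?thesis unfolding n_def by linarith
    qed
  qed
  show ?thesis using that[of B] B main by auto
qed

theorem lemma4p1:
  fixes g0 :: "'a::euclidean_space \<Rightarrow> real"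
    and g :: "'a \<Rightarrow> real^'m"
    and \<phi> :: "'a \<Rightarrow> real"
    and Oset :: "'a set"
    and \<mu>min \<mu>max Lmin Lmax M \<beta>C \<beta>S \<alpha> \<tau> :: real
    and x :: "nat \<Rightarrow> 'a"
    and \<xi> :: "nat \<Rightarrow> 'a"
    and V :: "nat \<Rightarrow> 'a^'m"
    and \<mu> :: "nat \<Rightarrow> nat \<Rightarrow> real"
    and L :: "nat \<Rightarrow> nat \<Rightarrow> real^'m"
    and Q :: "nat \<Rightarrow> nat \<Rightarrow> 'a \<Rightarrow> 'a"
    and xbar y v :: "nat \<Rightarrow> nat \<Rightarrow> 'a"
    and lam :: "nat \<Rightarrow> nat \<Rightarrow> real^'m"
    and jk :: "nat \<Rightarrow> nat"
  \<comment> \<open>Assumption 1\<close>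
  assumes O_open: "open Oset" and O_convex: "convex Oset"
    and Gamma_sub_O: "{z. g z \<in> nonpos_orth} \<subseteq> Oset"
    and g0_lip: "\<forall>z\<in>Oset. loc_lipschitz_at g0 z"
    and g0_uC2: "\<forall>z\<in>Oset. upper_C2_at g0 z"
    and g_lip: "\<forall>i z. loc_lipschitz_at (\<lambda>w. g w $ i) z"
    and g_uC2: "\<forall>i z. upper_C2_at (\<lambda>w. g w $ i) z"
    and phi_convex: "convex_on UNIV \<phi>"
    and F_bdd: "\<exists>c. \<forall>z. g z \<in> nonpos_orth \<longrightarrow> Fobj g0 g \<phi> z \<ge> ereal c"
  \<comment> \<open>parameters\<close>
    and par_mu: "0 < \<mu>min" "\<mu>min \<le> \<mu>max"
    and par_L: "0 < Lmin" "Lmin \<le> Lmax"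
    and par_pos: "M > 0" "\<beta>C > 0" "\<beta>S > 0" "\<alpha> > 0"
    and par_tau: "\<tau> > 1"
  \<comment> \<open>Algorithm iMBA\<close>
    and x0: "g (x 0) \<in> nonpos_orth"
    and xi_sub: "\<forall>k. \<xi> k \<in> limiting_subdiff g0 (x k)"
    and V_sub: "\<forall>k i. V k $ i \<in> limiting_subdiff (\<lambda>w. g w $ i) (x k)"
    and mu0: "\<forall>k. \<mu>min \<le> \<mu> k 0 \<and> \<mu> k 0 \<le> \<mu>max"
    and L0: "\<forall>k i. Lmin \<le> L k 0 $ i \<and> L k 0 $ i \<le> Lmax"
    and Q_sa: "\<forall>k j. j \<le> jk k \<longrightarrow> linear (Q k j) \<and> (\<forall>u w. Q k j u \<bullet> w = u \<bullet> Q k j w)"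
    and Q_bnd: "\<forall>k j. j \<le> jk k \<longrightarrow> (\<forall>u. \<mu> k j * (norm u)\<^sup>2 \<le> u \<bullet> Q k j u \<and>
                                           u \<bullet> Q k j u \<le> (\<mu> k j + M) * (norm u)\<^sup>2)"
    and xbar_min: "\<forall>k j. j \<le> jk k \<longrightarrow>
          Gfun g (xbar k j) (x k) (V k) (L k j) \<in> nonpos_orth \<and>
          (\<forall>z. Gfun g z (x k) (V k) (L k j) \<in> nonpos_orth \<longrightarrow>
               Fmodel g0 \<phi> (x k) (\<xi> k) (Q k j) (xbar k j) \<le> Fmodel g0 \<phi> (x k) (\<xi> k) (Q k j) z)"
    and v_sub: "\<forall>k j. j \<le> jk k \<longrightarrow> v k j \<in> limiting_subdiff \<phi> (y k j)"
    and lam_nn: "\<forall>k j i. j \<le> jk k \<longrightarrow> lam k j $ i \<ge> 0"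
    and y_desc: "\<forall>k j. j \<le> jk k \<longrightarrow>
          Fmodel g0 \<phi> (x k) (\<xi> k) (Q k j) (y k j) \<le> Fmodel g0 \<phi> (x k) (\<xi> k) (Q k j) (x k)"
    and y_feas: "\<forall>k j. j \<le> jk k \<longrightarrow>
          max 0 (- (lam k j \<bullet> Gfun g (y k j) (x k) (V k) (L k j)))
          + Max (range (\<lambda>i. max 0 (Gfun g (y k j) (x k) (V k) (L k j) $ i)))
          \<le> \<beta>C / 2 * (norm (y k j - x k))\<^sup>2"
    and y_stat: "\<forall>k j. j \<le> jk k \<longrightarrow>
          norm (\<xi> k + Q k j (y k j - x k) + v k j + (\<Sum>i\<in>UNIV. lam k j $ i *\<^sub>R V k $ i)
                + (L k j \<bullet> lam k j) *\<^sub>R (y k j - x k))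
          \<le> \<beta>S * norm (y k j - x k)"
    and accept: "\<forall>k. g (y k (jk k)) \<in> nonpos_orth \<and>
          Fobj g0 g \<phi> (y k (jk k)) \<le> Fobj g0 g \<phi> (x k) - ereal (\<alpha> / 2 * (norm (y k (jk k) - x k))\<^sup>2)"
    and reject: "\<forall>k j. j < jk k \<longrightarrow>
          \<not> (g (y k j) \<in> nonpos_orth \<and>
             Fobj g0 g \<phi> (y k j) \<le> Fobj g0 g \<phi> (x k) - ereal (\<alpha> / 2 * (norm (y k j - x k))\<^sup>2))"
    and upd_L: "\<forall>k j. j < jk k \<longrightarrow> g (y k j) \<notin> nonpos_orth \<longrightarrow>
          L k (Suc j) = \<tau> *\<^sub>R L k j \<and> \<mu> k (Suc j) = \<mu> k j"
    and upd_mu: "\<forall>k j. j < jk k \<longrightarrow> g (y k j) \<in> nonpos_orth \<longrightarrow>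
          L k (Suc j) = L k j \<and> \<mu> k (Suc j) = \<tau> * \<mu> k j"
    and x_next: "\<forall>k. x (Suc k) = y k (jk k)"
  \<comment> \<open>Assumption 2\<close>
    and A2: "\<forall>k j. j \<le> jk k \<longrightarrow>
          metric_subregular_orth (\<lambda>z. Gfun g z (x k) (V k) (L k j)) (xbar k j)"
  \<comment> \<open>Assumption 3\<close>
    and A3: "bounded (range x)"
  shows "bounded (range (\<lambda>k. (xbar k (jk k), \<xi> k, V k)))
         \<and> (\<exists>\<beta>L>0. \<forall>k. norm (L k (jk k)) \<le> \<beta>L)
         \<and> bounded (range (\<lambda>k. \<mu> k (jk k)))
         \<and> (\<exists>\<beta>Q>0. \<forall>k. onorm (Q k (jk k)) \<le> \<beta>Q)"
proof -
  have feas: "g (x k) \<in> nonpos_orth" for k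
  proof (induction k)
    case 0 then show ?case using x0 by simp
  next
    case (Suc k) then show ?case using accept x_next by simp
  qed
  obtain Rx where Rx: "Rx > 0" "\<forall>k. norm (x k) \<le> Rx"
    using A3 unfolding bounded_pos by auto
  have gcont: "continuous_on UNIV (\<lambda>w. g w $ i)" for i
    using lip_cont[of UNIV "\<lambda>w. g w $ i"] g_lip by simp
  have g0cont: "continuous_on Oset g0" by (rule lip_cont) (use g0_lip in simp)
  have Gclosed: "closed {z. g z \<in> nonpos_orth}"
    unfolding nonpos_orth_def
    by (simp add: closed_Collect_all closed_Collect_le gcont)
  have uc0: "\<forall>z\<in>Oset. upper_C2_at g0 z" using g0_uC2 .
  have S1c: "compact ({z. g z \<in> nonpos_orth} \<inter> cball 0 Rx)"
    by (rule closed_Int_compact[OF Gclosed compact_cball])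
  have S1O: "{z. g z \<in> nonpos_orth} \<inter> cball 0 Rx \<subseteq> Oset" using Gamma_sub_O by auto
  obtain \<rho>1 Vb0 where "\<rho>1 \<ge> 0" and Vb0: "Vb0 \<ge> 0" and
    uc1: "\<forall>x\<in>{z. g z \<in> nonpos_orth} \<inter> cball 0 Rx. \<forall>v\<in>limiting_subdiff g0 x. norm v \<le> Vb0 \<and>
        (\<forall>y\<in>{z. g z \<in> nonpos_orth} \<inter> cball 0 Rx. g0 y \<le> g0 x + v \<bullet> (y - x) + \<rho>1 / 2 * (norm (y - x))\<^sup>2)"
    by (rule uc2_global[OF O_open uc0 g0cont S1c S1O])
  have xS1: "x k \<in> {z. g z \<in> nonpos_orth} \<inter> cball 0 Rx" for k using feas Rx by simp
  have xib: "norm (\<xi> k) \<le> Vb0" for k using uc1 xS1 xi_sub by blast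
  obtain B1 where B1: "B1 \<ge> 0" and phil: "\<forall>x y. norm x \<le> Rx \<longrightarrow> \<phi> y - \<phi> x \<ge> - 2 * B1 * (norm (y - x) + 1)"
    by (rule convex_lower[OF phi_convex])
  have mumono: "j \<le> jk k \<longrightarrow> \<mu> k 0 \<le> \<mu> k j" for k j
  proof (induction j)
    case 0 then show ?case by simp
  next
    case (Suc j)
    show ?case
    proof
      assume a: "Suc j \<le> jk k"
      then have jl: "j < jk k" by simp
      have ih: "\<mu> k 0 \<le> \<mu> k j" using Suc a by simp
      have pos: "\<mu> k j > 0" using ih mu0 par_mu by (smt (verit))
      show "\<mu> k 0 \<le> \<mu> k (Suc j)"
      proof (cases "g (y k j) \<in> nonpos_orth")
        case True
        then have "\<mu> k (Suc j) = \<tau> * \<mu> k j" using upd_mu jl by blast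
        moreover have "\<mu> k j \<le> \<tau> * \<mu> k j" using pos par_tau by simp
        ultimately show ?thesis using ih by simp
      next
        case False
        then have "\<mu> k (Suc j) = \<mu> k j" using upd_L jl by blast
        then show ?thesis using ih by simp
      qed
    qed
  qed
  have mumin: "\<mu>min \<le> \<mu> k j" if "j \<le> jk k" for k j using mumono[of j k] that mu0[rule_format, of k] by linarith
  define Dy where "Dy = max 1 ((Vb0 + 2 * B1 + 2 * B1) / (\<mu>min / 2))"
  have Dy0: "Dy \<ge> 1" by (simp add: Dy_def)
  have dbound: "norm (z - x k) \<le> Dy"
    if jj: "j \<le> jk k" and fz: "Fmodel g0 \<phi> (x k) (\<xi> k) (Q k j) z \<le> Fmodel g0 \<phi> (x k) (\<xi> k) (Q k j) (x k)"
    for k j z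
  proof -
    define d where "d = z - x k"
    define n where "n = norm d"
    have fz': "\<xi> k \<bullet> d + 1 / 2 * (d \<bullet> Q k j d) + \<phi> z \<le> \<phi> (x k)"
      using fz unfolding Fmodel_def d_def by simp
    have qd: "\<mu> k j * n\<^sup>2 \<le> d \<bullet> Q k j d" using Q_bnd jj unfolding n_def by blast
    have qd2: "\<mu>min * n\<^sup>2 \<le> \<mu> k j * n\<^sup>2" using mumin[OF jj] by (intro mult_right_mono) auto
    have xd: "- (\<xi> k \<bullet> d) \<le> Vb0 * n"
    proof -
      have "- (\<xi> k \<bullet> d) \<le> norm (\<xi> k) * n" unfolding n_def
        using norm_cauchy_schwarz[of "- \<xi> k" d] by simp
      also have "\<dots> \<le> Vb0 * n" using xib unfolding n_def by (intro mult_right_mono) auto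
      finally show ?thesis .
    qed
    have ph: "\<phi> z - \<phi> (x k) \<ge> - 2 * B1 * (n + 1)" using phil Rx unfolding n_def d_def by blast
    have "\<mu>min / 2 * n\<^sup>2 \<le> (Vb0 + 2 * B1) * n + 2 * B1"
      using fz' qd qd2 xd ph by (simp add: algebra_simps)
    then have "n \<le> Dy" unfolding Dy_def
      by (intro quad_bound) (use par_mu Vb0 B1 n_def in auto)
    then show ?thesis by (simp add: n_def d_def)
  qed
  define R where "R = Rx + Dy"
  have Gxx: "Gfun g (x k) (x k) W LL = g (x k)" for k W LL
  proof -
    have "(\<chi> i. W $ i \<bullet> (x k - x k)) = (0::real^'m)" by (simp add: vec_eq_iff)
    then show ?thesis unfolding Gfun_def by simp
  qed
  have ynorm: "norm (y k j - x k) \<le> Dy" if "j \<le> jk k" for k j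
    using dbound[OF that] y_desc that by blast
  have yR: "norm (y k j) \<le> R" if "j \<le> jk k" for k j
  proof -
    have "norm (y k j) \<le> norm (x k) + norm (y k j - x k)" using norm_triangle_ineq[of "x k" "y k j - x k"] by simp
    then show ?thesis using ynorm[OF that] Rx unfolding R_def by (smt (verit))
  qed
  have xbR: "norm (xbar k (jk k)) \<le> R" for k
  proof -
    have "Fmodel g0 \<phi> (x k) (\<xi> k) (Q k (jk k)) (xbar k (jk k)) \<le> Fmodel g0 \<phi> (x k) (\<xi> k) (Q k (jk k)) (x k)"
      using xbar_min[rule_format, of "jk k" k] Gxx feas by simp
    then have "norm (xbar k (jk k) - x k) \<le> Dy" using dbound[of "jk k" k] by simp
    moreover have "norm (xbar k (jk k)) \<le> norm (x k) + norm (xbar k (jk k) - x k)"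
      using norm_triangle_ineq[of "x k" "xbar k (jk k) - x k"] by simp
    ultimately show ?thesis using Rx unfolding R_def by (smt (verit))
  qed
  have xR: "norm (x k) \<le> R" for k using Rx Dy0 unfolding R_def by (smt (verit))
  have "\<forall>i. \<exists>\<rho> Vb. \<rho> \<ge> 0 \<and> Vb \<ge> 0 \<and> (\<forall>x\<in>cball 0 R. \<forall>v\<in>limiting_subdiff (\<lambda>w. g w $ i) x. norm v \<le> Vb \<and>
        (\<forall>y\<in>cball 0 R. g y $ i \<le> g x $ i + v \<bullet> (y - x) + \<rho> / 2 * (norm (y - x))\<^sup>2))"
  proof
    fix i
    obtain \<rho> Vb where "\<rho> \<ge> 0" "Vb \<ge> 0" "\<forall>x\<in>cball 0 R. \<forall>v\<in>limiting_subdiff (\<lambda>w. g w $ i) x. norm v \<le> Vb \<and>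
        (\<forall>y\<in>cball 0 R. g y $ i \<le> g x $ i + v \<bullet> (y - x) + \<rho> / 2 * (norm (y - x))\<^sup>2)"
      by (rule uc2_global[OF open_UNIV _ gcont compact_cball subset_UNIV]) (use g_uC2 in simp)
    then show "\<exists>\<rho> Vb. \<rho> \<ge> 0 \<and> Vb \<ge> 0 \<and> (\<forall>x\<in>cball 0 R. \<forall>v\<in>limiting_subdiff (\<lambda>w. g w $ i) x. norm v \<le> Vb \<and>
        (\<forall>y\<in>cball 0 R. g y $ i \<le> g x $ i + v \<bullet> (y - x) + \<rho> / 2 * (norm (y - x))\<^sup>2))" by blast
  qed
  then obtain \<rho>f Vbf where \<rho>f: "\<forall>i. \<rho>f i \<ge> 0 \<and> Vbf i \<ge> 0 \<and> (\<forall>x\<in>cball 0 R. \<forall>v\<in>limiting_subdiff (\<lambda>w. g w $ i) x. norm v \<le> Vbf i \<and>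
        (\<forall>y\<in>cball 0 R. g y $ i \<le> g x $ i + v \<bullet> (y - x) + \<rho>f i / 2 * (norm (y - x))\<^sup>2))"
    by metis
  define \<rho>g where "\<rho>g = (\<Sum>i\<in>UNIV. \<rho>f i)"
  have \<rho>g0: "\<rho>g \<ge> 0" unfolding \<rho>g_def using \<rho>f by (simp add: sum_nonneg)
  have \<rho>gi: "\<rho>f i \<le> \<rho>g" for i unfolding \<rho>g_def using \<rho>f by (intro member_le_sum) auto
  have gup: "g y $ i \<le> g (x k) $ i + V k $ i \<bullet> (y - x k) + \<rho>g / 2 * (norm (y - x k))\<^sup>2"
    if "norm y \<le> R" for k y i
  proof -
    have "g y $ i \<le> g (x k) $ i + V k $ i \<bullet> (y - x k) + \<rho>f i / 2 * (norm (y - x k))\<^sup>2"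
      using \<rho>f V_sub xR that by simp
    moreover have "\<rho>f i / 2 * (norm (y - x k))\<^sup>2 \<le> \<rho>g / 2 * (norm (y - x k))\<^sup>2"
      using \<rho>gi by (intro mult_right_mono) auto
    ultimately show ?thesis by simp
  qed
  define VB where "VB = (\<Sum>i\<in>UNIV. Vbf i)"
  have Vnorm: "norm (V k) \<le> VB" for k
  proof -
    have "norm (V k) \<le> (\<Sum>i\<in>UNIV. norm (V k $ i))"
      unfolding norm_vec_def by (rule L2_set_le_sum) simp
    also have "\<dots> \<le> VB" unfolding VB_def
    proof (rule sum_mono)
      fix i
      have a: "x k \<in> cball 0 R" using xR by simp
      have b: "V k $ i \<in> limiting_subdiff (\<lambda>w. g w $ i) (x k)" using V_sub by blast
      show "norm (V k $ i) \<le> Vbf i" using \<rho>f a b by blast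
    qed
    finally show ?thesis .
  qed
  define T where "T = \<beta>C + \<rho>g"
  have feasL: "g (y k j) \<in> nonpos_orth" if jj: "j \<le> jk k" and LT: "\<forall>i. L k j $ i \<ge> T" for k j
    unfolding nonpos_orth_def
  proof (intro CollectI allI)
    fix i
    define d where "d = y k j - x k"
    define n where "n = norm d"
    define G where "G = Gfun g (y k j) (x k) (V k) (L k j)"
    have Geq: "G $ i = g (x k) $ i + V k $ i \<bullet> d + (1/2 * n\<^sup>2) * L k j $ i"
      unfolding G_def Gfun_def d_def n_def by simp
    have yf: "max 0 (- (lam k j \<bullet> G)) + Max (range (\<lambda>i. max 0 (G $ i))) \<le> \<beta>C / 2 * n\<^sup>2"
      using y_feas jj unfolding G_def n_def d_def by blast
    have "max 0 (G $ i) \<le> Max (range (\<lambda>i. max 0 (G $ i)))" by (rule Max_ge) auto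
    then have Gle: "G $ i \<le> \<beta>C / 2 * n\<^sup>2" using yf by linarith
    have gu: "g (y k j) $ i \<le> g (x k) $ i + V k $ i \<bullet> d + \<rho>g / 2 * n\<^sup>2"
      using gup[OF yR[OF jj], where k=k and i=i] unfolding d_def n_def by simp
    have "(T - L k j $ i) * n\<^sup>2 \<le> 0" using LT by (intro mult_nonpos_nonneg) auto
    then show "g (y k j) $ i \<le> 0" using Geq Gle gu unfolding T_def by (simp add: algebra_simps)
  qed
  have Linv: "j \<le> jk k \<longrightarrow> (\<exists>c. L k j = \<tau> ^ c *\<^sub>R L k 0 \<and> (c > 0 \<longrightarrow> Lmin * \<tau> ^ (c - 1) < T))" for k j
  proof (induction j)
    case 0 then show ?case by (intro impI exI[of _ 0]) simp
  next
    case (Suc j)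
    show ?case
    proof
      assume a: "Suc j \<le> jk k"
      then have jl: "j < jk k" by simp
      obtain c where c: "L k j = \<tau> ^ c *\<^sub>R L k 0" "c > 0 \<longrightarrow> Lmin * \<tau> ^ (c - 1) < T"
        using Suc a by auto
      show "\<exists>c. L k (Suc j) = \<tau> ^ c *\<^sub>R L k 0 \<and> (c > 0 \<longrightarrow> Lmin * \<tau> ^ (c - 1) < T)"
      proof (cases "g (y k j) \<in> nonpos_orth")
        case True
        then have "L k (Suc j) = L k j" using upd_mu jl by blast
        then show ?thesis using c by auto
      next
        case False
        then have Ls: "L k (Suc j) = \<tau> *\<^sub>R L k j" using upd_L jl by blast
        have lt: "Lmin * \<tau> ^ c < T"
        proof (rule ccontr)
          assume "\<not> Lmin * \<tau> ^ c < T"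
          then have ge: "T \<le> Lmin * \<tau> ^ c" by simp
          have "\<forall>i. L k j $ i \<ge> T"
          proof
            fix i
            have "Lmin * \<tau> ^ c \<le> L k 0 $ i * \<tau> ^ c"
              using L0 par_tau by (intro mult_right_mono) auto
            then show "L k j $ i \<ge> T" using ge c(1) by (simp add: mult.commute)
          qed
          then have "g (y k j) \<in> nonpos_orth" using feasL jl by simp
          then show False using False by simp
        qed
        have "L k (Suc j) = \<tau> ^ Suc c *\<^sub>R L k 0" using Ls c(1) by simp
        then show ?thesis using lt by (intro exI[of _ "Suc c"]) simp
      qed
    qed
  qed
  have T0: "T > 0" unfolding T_def using par_pos \<rho>g0 by simp
  define BL where "BL = Lmax * max 1 (\<tau> * T / Lmin)"
  have BL0: "BL > 0" unfolding BL_def using par_L by simp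
  have Lcomp: "0 \<le> L k (jk k) $ i \<and> L k (jk k) $ i \<le> BL" for k i
  proof -
    obtain c where c: "L k (jk k) = \<tau> ^ c *\<^sub>R L k 0" "c > 0 \<longrightarrow> Lmin * \<tau> ^ (c - 1) < T"
      using Linv[of "jk k" k] by auto
    have L0i: "Lmin \<le> L k 0 $ i" "L k 0 $ i \<le> Lmax" using L0 by auto
    have tc: "\<tau> ^ c > 0" using par_tau by simp
    have eq: "L k (jk k) $ i = \<tau> ^ c * L k 0 $ i" using c(1) by simp
    have tcb: "\<tau> ^ c \<le> max 1 (\<tau> * T / Lmin)"
    proof (cases c)
      case 0 then show ?thesis by simp
    next
      case (Suc c')
      then have "Lmin * \<tau> ^ c' < T" using c(2) by simp
      then have "\<tau> ^ c' < T / Lmin" using par_L by (simp add: field_simps)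
      then have "\<tau> * \<tau> ^ c' \<le> \<tau> * (T / Lmin)" using par_tau by (intro mult_left_mono) auto
      then show ?thesis using Suc by simp
    qed
    have "\<tau> ^ c * L k 0 $ i \<le> max 1 (\<tau> * T / Lmin) * Lmax"
    proof (rule mult_mono[OF tcb L0i(2)])
      show "0 \<le> max 1 (\<tau> * T / Lmin)" by simp
      show "0 \<le> L k 0 $ i" using L0i(1) par_L by linarith
    qed
    then show ?thesis using eq tc L0i par_L unfolding BL_def by (simp add: mult.commute)
  qed
  define \<beta>L where "\<beta>L = real CARD('m) * BL + 1"
  have Lb: "norm (L k (jk k)) \<le> \<beta>L" for k
  proof -
    have "norm (L k (jk k)) \<le> (\<Sum>i\<in>UNIV. \<bar>L k (jk k) $ i\<bar>)" by (rule norm_le_l1_cart)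
    also have "\<dots> \<le> (\<Sum>i\<in>(UNIV::'m set). BL)" using Lcomp by (intro sum_mono) auto
    also have "\<dots> = real CARD('m) * BL" by simp
    finally show ?thesis unfolding \<beta>L_def by simp
  qed
  have \<beta>L0: "\<beta>L > 0" unfolding \<beta>L_def using BL0 by (simp add: add_nonneg_pos)
  have S2c: "compact ({z. g z \<in> nonpos_orth} \<inter> cball 0 R)"
    by (rule closed_Int_compact[OF Gclosed compact_cball])
  have S2O: "{z. g z \<in> nonpos_orth} \<inter> cball 0 R \<subseteq> Oset" using Gamma_sub_O by auto
  obtain \<rho>0 Vb2 where \<rho>0: "\<rho>0 \<ge> 0" and "Vb2 \<ge> 0" and
    uc2: "\<forall>x\<in>{z. g z \<in> nonpos_orth} \<inter> cball 0 R. \<forall>v\<in>limiting_subdiff g0 x. norm v \<le> Vb2 \<and>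
        (\<forall>y\<in>{z. g z \<in> nonpos_orth} \<inter> cball 0 R. g0 y \<le> g0 x + v \<bullet> (y - x) + \<rho>0 / 2 * (norm (y - x))\<^sup>2)"
    by (rule uc2_global[OF O_open uc0 g0cont S2c S2O])
  define T0 where "T0 = \<rho>0 + \<alpha>"
  have T00: "T0 > 0" unfolding T0_def using \<rho>0 par_pos by simp
  have muacc: "\<mu> k j < T0" if jl: "j < jk k" and yf: "g (y k j) \<in> nonpos_orth" for k j
  proof (rule ccontr)
    assume "\<not> \<mu> k j < T0"
    then have muT: "T0 \<le> \<mu> k j" by simp
    have jj: "j \<le> jk k" using jl by simp
    define d where "d = y k j - x k"
    define n where "n = norm d"
    have xs: "x k \<in> {z. g z \<in> nonpos_orth} \<inter> cball 0 R" using feas xR by simp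
    have ys: "y k j \<in> {z. g z \<in> nonpos_orth} \<inter> cball 0 R" using yf yR[OF jj] by simp
    have g0y: "g0 (y k j) \<le> g0 (x k) + \<xi> k \<bullet> d + \<rho>0 / 2 * n\<^sup>2"
      using uc2 xs ys xi_sub unfolding d_def n_def by blast
    have fz': "\<xi> k \<bullet> d + 1 / 2 * (d \<bullet> Q k j d) + \<phi> (y k j) \<le> \<phi> (x k)"
    proof -
      have "Fmodel g0 \<phi> (x k) (\<xi> k) (Q k j) (y k j) \<le> Fmodel g0 \<phi> (x k) (\<xi> k) (Q k j) (x k)"
        using y_desc jj by blast
      then have "\<xi> k \<bullet> (y k j - x k) + 1 / 2 * ((y k j - x k) \<bullet> Q k j (y k j - x k)) + \<phi> (y k j) \<le> \<phi> (x k)"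
        unfolding Fmodel_def by simp
      then show ?thesis unfolding d_def by simp
    qed
    have qd: "\<mu> k j * n\<^sup>2 \<le> d \<bullet> Q k j d" using Q_bnd jj unfolding n_def by blast
    have qd2: "T0 * n\<^sup>2 \<le> \<mu> k j * n\<^sup>2" using muT by (intro mult_right_mono) auto
    have main: "g0 (y k j) + \<phi> (y k j) \<le> g0 (x k) + \<phi> (x k) - \<alpha> / 2 * n\<^sup>2"
      using g0y fz' qd qd2 unfolding T0_def by (simp add: algebra_simps)
    have "Fobj g0 g \<phi> (y k j) \<le> Fobj g0 g \<phi> (x k) - ereal (\<alpha> / 2 * (norm (y k j - x k))\<^sup>2)"
      using main yf feas[of k] unfolding Fobj_def n_def d_def by simp
    then show False using reject jl yf by blast
  qed
  have muinv: "j \<le> jk k \<longrightarrow> (\<exists>c. \<mu> k j = \<tau> ^ c * \<mu> k 0 \<and> (c > 0 \<longrightarrow> \<tau> ^ (c - 1) * \<mu> k 0 < T0))" for k j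
  proof (induction j)
    case 0 then show ?case by (intro impI exI[of _ 0]) simp
  next
    case (Suc j)
    show ?case
    proof
      assume a: "Suc j \<le> jk k"
      then have jl: "j < jk k" by simp
      obtain c where c: "\<mu> k j = \<tau> ^ c * \<mu> k 0" "c > 0 \<longrightarrow> \<tau> ^ (c - 1) * \<mu> k 0 < T0"
        using Suc a by auto
      show "\<exists>c. \<mu> k (Suc j) = \<tau> ^ c * \<mu> k 0 \<and> (c > 0 \<longrightarrow> \<tau> ^ (c - 1) * \<mu> k 0 < T0)"
      proof (cases "g (y k j) \<in> nonpos_orth")
        case True
        then have ms: "\<mu> k (Suc j) = \<tau> * \<mu> k j" using upd_mu jl by blast
        have lt: "\<tau> ^ c * \<mu> k 0 < T0" using muacc[OF jl True] c(1) by simp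
        have "\<mu> k (Suc j) = \<tau> ^ Suc c * \<mu> k 0" using ms c(1) by simp
        then show ?thesis using lt by (intro exI[of _ "Suc c"]) simp
      next
        case False
        then have "\<mu> k (Suc j) = \<mu> k j" using upd_L jl by blast
        then show ?thesis using c by auto
      qed
    qed
  qed
  define B\<mu> where "B\<mu> = max \<mu>max (\<tau> * T0)"
  have mub: "\<mu>min \<le> \<mu> k (jk k) \<and> \<mu> k (jk k) \<le> B\<mu>" for k
  proof -
    obtain c where c: "\<mu> k (jk k) = \<tau> ^ c * \<mu> k 0" "c > 0 \<longrightarrow> \<tau> ^ (c - 1) * \<mu> k 0 < T0"
      using muinv[of "jk k" k] by auto
    have "\<mu> k (jk k) \<le> B\<mu>"
    proof (cases c)
      case 0
      have "\<mu> k 0 \<le> \<mu>max" using mu0 by blast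
      then show ?thesis using c(1) 0 unfolding B\<mu>_def by simp
    next
      case (Suc c')
      then have "\<tau> ^ c' * \<mu> k 0 < T0" using c(2) by simp
      then have "\<tau> * (\<tau> ^ c' * \<mu> k 0) \<le> \<tau> * T0" using par_tau by (intro mult_left_mono) auto
      then show ?thesis using Suc c(1) unfolding B\<mu>_def by (simp add: mult.assoc)
    qed
    then show ?thesis using mumin[of "jk k" k] by simp
  qed
  have Qb: "onorm (Q k (jk k)) \<le> B\<mu> + M" for k
  proof -
    have jj: "jk k \<le> jk k" by simp
    have lin: "linear (Q k (jk k))" and sym: "\<forall>u w. Q k (jk k) u \<bullet> w = u \<bullet> Q k (jk k) w"
      using Q_sa jj by blast+
    have qb: "\<forall>u. \<mu> k (jk k) * (norm u)\<^sup>2 \<le> u \<bullet> Q k (jk k) u \<and> u \<bullet> Q k (jk k) u \<le> (\<mu> k (jk k) + M) * (norm u)\<^sup>2"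
      using Q_bnd jj by blast
    have mpos: "\<mu> k (jk k) \<ge> 0" using mub[of k] par_mu by linarith
    have lo: "\<forall>u. 0 \<le> u \<bullet> Q k (jk k) u"
    proof
      fix u :: 'a
      have "0 \<le> \<mu> k (jk k) * (norm u)\<^sup>2" using mpos by simp
      then show "0 \<le> u \<bullet> Q k (jk k) u" using qb by (meson order_trans)
    qed
    have "norm (Q k (jk k) u) \<le> (\<mu> k (jk k) + M) * norm u" for u
      by (rule psd_norm_bound[OF lin sym lo]) (use qb mpos par_pos in auto)
    then have "onorm (Q k (jk k)) \<le> \<mu> k (jk k) + M" by (rule onorm_le)
    then show ?thesis using mub[of k] by simp
  qed
  have P1: "bounded (range (\<lambda>k. (xbar k (jk k), \<xi> k, V k)))"
  proof (rule bounded_subset)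
    show "bounded (cball 0 R \<times> (cball 0 Vb0 \<times> cball 0 VB))"
      by (intro bounded_Times bounded_cball)
    show "range (\<lambda>k. (xbar k (jk k), \<xi> k, V k)) \<subseteq> cball 0 R \<times> (cball 0 Vb0 \<times> cball 0 VB)"
      using xbR xib Vnorm by auto
  qed
  have P3: "bounded (range (\<lambda>k. \<mu> k (jk k)))"
  proof (rule bounded_subset)
    show "bounded (cball (0::real) B\<mu>)" by (rule bounded_cball)
    show "range (\<lambda>k. \<mu> k (jk k)) \<subseteq> cball 0 B\<mu>"
      using mub par_mu by (auto simp: abs_le_iff) (smt (verit))
  qed
  have P4: "\<exists>\<beta>Q>0. \<forall>k. onorm (Q k (jk k)) \<le> \<beta>Q"
  proof (intro exI conjI allI)
    show "B\<mu> + M > 0" unfolding B\<mu>_def using par_mu par_pos by (simp add: add_pos_pos)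
    show "onorm (Q k (jk k)) \<le> B\<mu> + M" for k by (rule Qb)
  qed
  show ?thesis using P1 P3 P4 Lb \<beta>L0 by blast
qed

end
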